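(* Let $\mathbb{K}$ be a field of characteristic $3$ and $\mathcal{F}$ an exceptional $\overline{1}$-spec subspace of $M_3(\mathbb{K})$. Then for every nonzero $x\in\mathbb{K}^3$, $\dim\{Mx: M\in\mathcal{F}\}\geq 2$.
   Context: A $\overline{1}$-spec subspace of $M_3(\mathbb{K})$ is a linear subspace in which every matrix has at most one eigenvalue in an algebraic closure $\overline{\mathbb{K}}$; it is exceptional if it has dimension $4$ and is not similar to $\mathbb{K}I_3\oplus\mathrm{NT}_3(\mathbb{K})$, where $\mathrm{NT}_3(\mathbb{K})$ is the space of strictly upper-triangular $3\times3$ matrices. *)

theory Defs
  imports "HOL-Analysis.Analysis" "HOL-Algebra.Algebraic_Closure_Type"
begin

definition mscale :: "'a::field \<Rightarrow> 'a^3^3 \<Rightarrow> 'a^3^3" where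
  "mscale c A = (\<chi> i j. c * A $ i $ j)"

definition ac_eigenvalue :: "'a::field^3^3 \<Rightarrow> 'a alg_closure \<Rightarrow> bool" where
  "ac_eigenvalue M z \<longleftrightarrow>
     (\<exists>v :: ('a alg_closure)^3. v \<noteq> 0 \<and> map_matrix to_ac M *v v = z *s v)"

definition one_spec_subspace :: "('a::field^3^3) set \<Rightarrow> bool" where
  "one_spec_subspace F \<longleftrightarrow> module.subspace mscale F \<and>
     (\<forall>M\<in>F. \<forall>z w. ac_eigenvalue M z \<and> ac_eigenvalue M w \<longrightarrow> z = w)"

definition NT3 :: "('a::field^3^3) set" where
  "NT3 = {N. \<forall>i j. j \<le> i \<longrightarrow> N $ i $ j = 0}"

definition KI_NT3 :: "('a::field^3^3) set" where
  "KI_NT3 = {mat c + N | c N. N \<in> NT3}"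

definition similar_space :: "('a::field^3^3) set \<Rightarrow> ('a^3^3) set \<Rightarrow> bool" where
  "similar_space F G \<longleftrightarrow> (\<exists>P Q. P ** Q = mat 1 \<and> Q ** P = mat 1 \<and>
       F = (\<lambda>M. P ** M ** Q) ` G)"

definition exceptional_one_spec :: "('a::field^3^3) set \<Rightarrow> bool" where
  "exceptional_one_spec F \<longleftrightarrow> one_spec_subspace F \<and>
     vector_space.dim mscale F = 4 \<and> \<not> similar_space F KI_NT3"

end

theory Submission
  imports Defs
begin

no_notation fps_nth (infixl \<open>$\<close> 75)

lemma mscale_nth[simp]: "mscale c A $ i $ j = c * A $ i $ j"
  by (simp add: mscale_def)

interpretation ms: vector_space "mscale :: 'a::field \<Rightarrow> 'a^3^3 \<Rightarrow> 'a^3^3"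
  by unfold_locales (simp_all add: vec_eq_iff algebra_simps)

definition emat :: "3 \<Rightarrow> 3 \<Rightarrow> 'a::field^3^3" where
  "emat i j = (\<chi> a b. if a = i \<and> b = j then 1 else 0)"

lemma emat_nth[simp]: "emat i j $ a $ b = (if a = i \<and> b = j then 1 else 0)"
  by (simp add: emat_def)

lemma sum_emat: "(M::'a::field^3^3) = (\<Sum>p\<in>UNIV. mscale (M $ fst p $ snd p) (emat (fst p) (snd p)))"
proof -
  have "(\<Sum>p\<in>UNIV. mscale (M $ fst p $ snd p) (emat (fst p) (snd p))) $ a $ b = M $ a $ b" for a b
  proof -
    have "(\<Sum>p\<in>UNIV. mscale (M $ fst p $ snd p) (emat (fst p) (snd p))) $ a $ b
       = (\<Sum>p\<in>UNIV. M $ fst p $ snd p * (if a = fst p \<and> b = snd p then 1 else 0))"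
      by (simp add: sum_component)
    also have "\<dots> = (\<Sum>p\<in>UNIV. if p = (a,b) then M $ a $ b else 0)"
      by (rule sum.cong) auto
    finally show ?thesis by simp
  qed
  then show ?thesis by (simp add: vec_eq_iff)
qed

lemma emat_inj: "emat i j = emat k l \<Longrightarrow> i = k \<and> j = l"
  by (metis emat_nth one_neq_zero)

interpretation ms: finite_dimensional_vector_space "mscale :: 'a::field \<Rightarrow> 'a^3^3 \<Rightarrow> 'a^3^3"
   "(\<lambda>p. emat (fst p) (snd p)) ` UNIV"
proof
  show "finite ((\<lambda>p. emat (fst p) (snd p)) ` (UNIV::(3\<times>3) set) :: ('a^3^3) set)" by simp
  show "ms.span ((\<lambda>p. emat (fst p) (snd p)) ` UNIV) = (UNIV :: ('a^3^3) set)"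
  proof safe
    fix M :: "'a^3^3"
    show "M \<in> ms.span ((\<lambda>p. emat (fst p) (snd p)) ` UNIV)"
      by (subst sum_emat) (intro ms.span_sum ms.span_scale ms.span_base; auto)
  qed simp
  show "ms.independent ((\<lambda>p. emat (fst p) (snd p)) ` (UNIV::(3\<times>3) set) :: ('a^3^3) set)"
    unfolding ms.dependent_explicit
  proof clarify
    fix T u v
    assume T: "finite T" "T \<subseteq> (\<lambda>p. emat (fst p) (snd p)) ` (UNIV::(3\<times>3) set)"
      and s: "(\<Sum>v\<in>T. mscale (u v) v) = (0::'a^3^3)" and v: "v \<in> T" "u v \<noteq> 0"
    from v T obtain a b where vab: "v = emat a b" by auto
    have "0 = (\<Sum>w\<in>T. mscale (u w) w) $ a $ b" using s by simp
    also have "\<dots> = (\<Sum>w\<in>T. u w * w $ a $ b)" by (simp add: sum_component)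
    also have "\<dots> = (\<Sum>w\<in>T. if w = v then u v else 0)"
    proof (rule sum.cong[OF refl])
      fix w assume "w \<in> T"
      then obtain c d where "w = emat c d" using T by auto
      then show "u w * w $ a $ b = (if w = v then u v else 0)"
        using vab emat_inj by auto
    qed
    also have "\<dots> = u v" using v T by simp
    finally show False using v by simp
  qed
qed



lemma alg_cubic: "\<exists>x::'b::alg_closed_field. x^3 + a*x^2 + b*x + c = 0"
proof -
  have "\<exists>x::'b. (\<Sum>k\<le>3. (if k=0 then c else if k=1 then b else if k=2 then a else 1) * x^k) = 0"
    by (rule alg_closed) auto
  then show ?thesis by (simp add: eval_nat_numeral atMost_Suc algebra_simps)
qed

lemma alg_quad: "\<exists>x::'b::alg_closed_field. x^2 + b*x + c = 0"
proof -
  have "\<exists>x::'b. (\<Sum>k\<le>2. (if k=0 then c else if k=1 then b else 1) * x^k) = 0"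
    by (rule alg_closed) auto
  then show ?thesis by (simp add: eval_nat_numeral atMost_Suc algebra_simps)
qed

lemma mat_mult_vec: "mat z *v v = z *s (v::'b::field^'n)"
proof -
  have "(\<Sum>j\<in>UNIV. (if i = j then z else 0) * v$j) = z * v$i" for i
  proof -
    have "(\<Sum>j\<in>UNIV. (if i = j then z else 0) * v$j) = (\<Sum>j\<in>UNIV. if i = j then z * v$j else 0)"
      by (rule sum.cong) auto
    then show ?thesis by simp
  qed
  then show ?thesis by (simp add: vec_eq_iff matrix_vector_mult_def mat_def)
qed

lemma det_zero_eig:
  fixes A :: "'b::field^3^3"
  assumes "det (mat z - A) = 0"
  shows "\<exists>v. v \<noteq> 0 \<and> A *v v = z *s v"
proof -
  have "\<not> invertible (mat z - A)" using assms invertible_det_nz by blast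
  then have "\<not>(\<forall>x. (mat z - A) *v x = 0 \<longrightarrow> x = 0)"
    using matrix_left_invertible_ker invertible_left_inverse by blast
  then obtain v where v: "v\<noteq>0" "(mat z - A) *v v = 0" by blast
  moreover have "(mat z - A) *v v = z *s v - A *v v"
    by (simp add: matrix_vector_mult_diff_rdistrib mat_mult_vec)
  ultimately show ?thesis by auto
qed

definition c1 :: "'a::field^3^3 \<Rightarrow> 'a" where
  "c1 M = (M$1$1)*(M$2$2) - (M$1$2)*(M$2$1) + (M$1$1)*(M$3$3) - (M$1$3)*(M$3$1) + (M$2$2)*(M$3$3) - (M$2$3)*(M$3$2)"

lemma three_zero: assumes "CHAR('a::field) = 3" shows "(3::'a) = 0"
proof -
  have "of_nat CHAR('a) = (0::'a)" by (rule of_nat_CHAR)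
  then show ?thesis using assms by simp
qed

lemma poly3: fixes a b c d e f g h i z :: "'b::field"
  shows "(z - a) * (z - e) * (z - i) + (-b) * (-f) * (-g) + (-c) * (-d) * (-h) - (z-a) * (-f) * (-h) - (-b) * (-d) * (z - i) - (-c) * (z - e) * (-g)
  = z^3 - (a + e + i)*z^2 + (a*e - b*d + a*i - c*g + e*i - f*h)*z - (a*e*i + b*f*g + c*d*h - a*f*h - b*d*i - c*e*g)"
  by (simp add: algebra_simps power2_eq_square power3_eq_cube)

lemma e: fixes A :: "'b::field^3^3" shows
  "(mat z - A)$1$1 = z - (A$1$1)" "(mat z - A)$2$2 = z - (A$2$2)" "(mat z - A)$3$3 = z - (A$3$3)"
  "(mat z - A)$1$2 = - (A$1$2)" "(mat z - A)$1$3 = - (A$1$3)" "(mat z - A)$2$1 = - (A$2$1)"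
  "(mat z - A)$2$3 = - (A$2$3)" "(mat z - A)$3$1 = - (A$3$1)" "(mat z - A)$3$2 = - (A$3$2)"
  by (simp_all add: mat_def)

lemma cp: fixes A :: "'b::field^3^3" shows "det (mat z - A) = z^3 - trace A*z^2 + c1 A*z - det A"
proof -
  have "det (mat z - A) = (z - (A$1$1)) * (z - (A$2$2)) * (z - (A$3$3)) + (-(A$1$2)) * (-(A$2$3)) * (-(A$3$1)) + (-(A$1$3)) * (-(A$2$1)) * (-(A$3$2))
     - (z-(A$1$1)) * (-(A$2$3)) * (-(A$3$2)) - (-(A$1$2)) * (-(A$2$1)) * (z - (A$3$3)) - (-(A$1$3)) * (z - (A$2$2)) * (-(A$3$1))"
    by (simp only: det_3 e)
  also have "\<dots> = z^3 - trace A*z^2 + c1 A*z - det A"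
    by (simp only: poly3 trace_def sum_3 c1_def det_3[of A])
  finally show ?thesis .
qed

lemma one_eig_tr:
  fixes M :: "'a::field^3^3"
  assumes ch: "CHAR('a) = 3" and one: "\<forall>z w. ac_eigenvalue M z \<and> ac_eigenvalue M w \<longrightarrow> z = w"
  shows "trace M = 0 \<and> c1 M = 0"
proof -
  define A where "A = map_matrix to_ac M"
  define T where "T = to_ac (trace M)"
  define S where "S = to_ac (c1 M)"
  define D where "D = to_ac (det M)"
  have tA: "trace A = T" unfolding A_def T_def trace_def sum_3 by simp
  have sA: "c1 A = S" unfolding A_def S_def c1_def by simp
  have dA: "det A = D" unfolding A_def D_def det_3 by simp
  have cpz: "det (mat z - A) = z^3 - T*z^2 + S*z - D" for z
    using cp[of z A] tA sA dA by simp
  have eig: "ac_eigenvalue M z" if "z^3 - T*z^2 + S*z - D = 0" for z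
    using det_zero_eig[of z A] that cpz unfolding ac_eigenvalue_def A_def by auto
  have three: "(3::'a alg_closure) = 0"
    by (rule three_zero) (simp add: ch)
  obtain r where r: "r^3 + (-T)*r^2 + S*r + (-D) = 0" using alg_cubic by blast
  obtain w where w: "w^2 + (r - T)*w + (r^2 - T*r + S) = 0" using alg_quad by blast
  define w' where "w' = -(r - T) - w"
  have id: "z^3 - T*z^2 + S*z - D = (z - r)*(z^2 + (r-T)*z + (r^2 - T*r + S)) + (r^3 - T*r^2 + S*r - D)" for z
    by (simp add: algebra_simps power2_eq_square power3_eq_cube)
  have "w'^2 + (r - T)*w' + (r^2 - T*r + S) = w^2 + (r - T)*w + (r^2 - T*r + S)"
    unfolding w'_def by (simp add: algebra_simps power2_eq_square)
  then have q': "w'^2 + (r - T)*w' + (r^2 - T*r + S) = 0" using w by simp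
  have pr: "r^3 - T*r^2 + S*r - D = 0" using r by (simp add: algebra_simps)
  have "w^3 - T*w^2 + S*w - D = 0" using id[of w] w pr by simp
  moreover have "w'^3 - T*w'^2 + S*w' - D = 0" using id[of w'] q' pr by simp
  ultimately have wr: "w = r" "w' = r" using eig pr one by blast+
  then have "T = 3 * r" unfolding w'_def by (simp add: algebra_simps)
  then have T0: "T = 0" using three by simp
  have "S = - (3 * r^2)" using w wr T0 by (simp add: algebra_simps power2_eq_square eq_neg_iff_add_eq_0)
  then have "S = 0" using three by simp
  then show ?thesis using T0 unfolding T_def S_def by simp
qed



lemma tr3: "trace (M::'a::field^3^3) = (M$1$1) + (M$2$2) + (M$3$3)" unfolding trace_def sum_3 ..

lemma trm: "trace ((M::'a::field^3^3) ** N) = (M$1$1)*(N$1$1) + (M$1$2)*(N$2$1) + (M$1$3)*(N$3$1) + (M$2$1)*(N$1$2) + (M$2$2)*(N$2$2) + (M$2$3)*(N$3$2) + (M$3$1)*(N$1$3) + (M$3$2)*(N$2$3) + (M$3$3)*(N$3$3)"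
  unfolding trace_def matrix_matrix_mult_def sum_3 by (simp add: algebra_simps)

lemma c1_add: "c1 (M + N) = c1 M + c1 N + trace M * trace N - trace ((M::'a::field^3^3) ** N)"
  unfolding trm unfolding c1_def tr3 vector_add_component by (simp add: algebra_simps)

lemma F_trace:
  assumes ch: "CHAR('a::field) = 3" and F: "one_spec_subspace (F::('a^3^3) set)" and M: "M \<in> F" and N: "N \<in> F"
  shows "trace M = 0 \<and> trace (M ** N) = 0"
proof -
  have sub: "ms.subspace F" using F unfolding one_spec_subspace_def by simp
  have e: "trace Z = 0 \<and> c1 Z = 0" if "Z \<in> F" for Z
  proof -
    have "\<forall>z w. ac_eigenvalue Z z \<and> ac_eigenvalue Z w \<longrightarrow> z = w"
      using F that unfolding one_spec_subspace_def by blast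
    then show ?thesis by (rule one_eig_tr[OF ch])
  qed
  have "M + N \<in> F" using sub M N by (rule ms.subspace_add)
  then show ?thesis using e[OF M] e[OF N] e[of "M+N"] c1_add[of M N] by simp
qed

lemma cross2: fixes a b c a' b' c' :: "'a::field"
  assumes X: "a^2 + b*c = 0" and Y: "a'^2 + b'*c' = 0" and E: "2*a*a' + b*c' + b'*c = 0"
  shows "a*b' = a'*b \<and> a*c' = a'*c \<and> b*c' = b'*c"
proof -
  have "(a*b' - a'*b)^2 = b'^2 * (a^2 + b*c) + b^2*(a'^2 + b'*c') - b*b'*(2*a*a' + b*c' + b'*c)"
    by (simp add: algebra_simps power2_eq_square)
  then have 1: "a*b' = a'*b" using X Y E by simp
  have "(a*c' - a'*c)^2 = c'^2*(a^2+b*c) + c^2*(a'^2+b'*c') - c*c'*(2*a*a' + b*c' + b'*c)"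
    by (simp add: algebra_simps power2_eq_square)
  then have 2: "a*c' = a'*c" using X Y E by simp
  have "(b*c' - b'*c)^2 = (2*a*a' + b*c' + b'*c)^2 - 4*a*a'*(2*a*a' + b*c' + b'*c) - 4*(a^2+b*c)*(a'^2+b'*c') + 4*(a^2+b*c)*a'^2 + 4*a^2*(a'^2+b'*c')"
    by (simp add: algebra_simps power2_eq_square)
  then have 3: "b*c' = b'*c" using X Y E by simp
  show ?thesis using 1 2 3 by simp
qed

lemma prop3: fixes a b c a' b' c' :: "'a::field"
  assumes "a*b' = a'*b" "a*c' = a'*c" "b*c' = b'*c" "a \<noteq> 0 \<or> b \<noteq> 0 \<or> c \<noteq> 0"
  shows "\<exists>l. a' = l*a \<and> b' = l*b \<and> c' = l*c"
proof -
  { assume a: "a \<noteq> 0"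
    then have ?thesis using assms by (intro exI[of _ "a'/a"]) (auto simp: field_simps) }
  moreover
  { assume b: "b \<noteq> 0"
    then have ?thesis using assms by (intro exI[of _ "b'/b"]) (auto simp: field_simps) }
  moreover
  { assume c: "c \<noteq> 0"
    then have ?thesis using assms by (intro exI[of _ "c'/c"]) (auto simp: field_simps) }
  ultimately show ?thesis using assms(4) by blast
qed

lemma two_nz: assumes "CHAR('a::field) = 3" shows "(2::'a) \<noteq> 0"
proof
  assume "(2::'a) = 0"
  moreover have "(3::'a) = 0" using three_zero assms by blast
  ultimately have "(3::'a) - 2 = 0" by simp
  then show False by simp
qed



lemma col1: "((M::'a::field^3^3) *v axis 1 1) $ i = M $ i $ 1"
  by (simp add: matrix_vector_mult_def sum_3 axis_def)

lemma mscale_mv: "mscale c (A::'a::field^3^3) *v v = c *s (A *v v)"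
  by (simp add: vec_eq_iff matrix_vector_mult_def sum_distrib_left algebra_simps)

lemma mat3_eqI: fixes A B :: "'a::field^3^3"
  assumes "A$1$1 = B$1$1" "A$1$2 = B$1$2" "A$1$3 = B$1$3" "A$2$1 = B$2$1" "A$2$2 = B$2$2"
    "A$2$3 = B$2$3" "A$3$1 = B$3$1" "A$3$2 = B$3$2" "A$3$3 = B$3$3"
  shows "A = B"
  using assms by (simp add: vec_eq_iff forall_3)

lemma le3: "(j::3) \<le> i \<longleftrightarrow> (i = 1 \<and> (j = 1 \<or> j = 3)) \<or> i = 2 \<or> (i = 3 \<and> j = 3)"
  using exhaust_3[of i] exhaust_3[of j] by (auto simp: less_eq_bit1_def bit1.Rep_numeral bit1.Rep_1)

lemma dim_kernel_step:
  fixes F :: "('a::field^3^3) set" and v y :: "'a^3"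
  assumes sub: "ms.subspace F" and y: "\<And>M. M \<in> F \<Longrightarrow> \<exists>t. M *v v = t *s y"
  shows "ms.dim F \<le> ms.dim {M\<in>F. M *v v = 0} + 1"
proof (cases "\<forall>M\<in>F. M *v v = 0")
  case True then have "{M\<in>F. M *v v = 0} = F" by auto
  then show ?thesis by simp
next
  case False then obtain A where A: "A \<in> F" "A *v v \<noteq> 0" by auto
  obtain t0 where t0: "A *v v = t0 *s y" using y A by blast
  have t0nz: "t0 \<noteq> 0" using A t0 by auto
  define G where "G = {M\<in>F. M *v v = 0}"
  have "F \<subseteq> ms.span (insert A G)"
  proof
    fix M assume M: "M \<in> F"
    obtain t where t: "M *v v = t *s y" using y M by blast
    define c where "c = t / t0"
    have "(M - mscale c A) *v v = t *s y - c *s (t0 *s y)"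
      by (simp add: matrix_vector_mult_diff_rdistrib mscale_mv t t0)
    also have "\<dots> = 0" using t0nz by (simp add: c_def)
    finally have "M - mscale c A \<in> G" unfolding G_def
      using ms.subspace_diff[OF sub M ms.subspace_scale[OF sub A(1)]] by simp
    then have "M - mscale c A \<in> ms.span (insert A G)" by (simp add: ms.span_base)
    moreover have "mscale c A \<in> ms.span (insert A G)" by (simp add: ms.span_base ms.span_scale)
    ultimately have "(M - mscale c A) + mscale c A \<in> ms.span (insert A G)" by (rule ms.span_add)
    then show "M \<in> ms.span (insert A G)" by simp
  qed
  then have "ms.dim F \<le> ms.dim (insert A G)" by (rule ms.dim_mono)
  also have "\<dots> \<le> ms.dim G + 1" by (simp add: ms.dim_insert)
  finally show ?thesis unfolding G_def .
qed

lemma iso_pair: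
  fixes M N :: "'a::field^3^3"
  assumes ch: "CHAR('a) = 3" and z: "M$2$1 = 0" "M$3$1 = 0" "N$2$1 = 0" "N$3$1 = 0"
    and t: "trace M = 0" "trace N = 0" "trace (M**N) = 0"
  shows "2*((M$2$2) - (M$1$1))*((N$2$2) - (N$1$1)) + (M$2$3)*(N$3$2) + (N$2$3)*(M$3$2) = 0"
proof -
  have m3: "M$3$3 = - (M$1$1) - (M$2$2)" using t(1) unfolding tr3 by (simp add: eq_neg_iff_add_eq_0 algebra_simps)
  have n3: "N$3$3 = - (N$1$1) - (N$2$2)" using t(2) unfolding tr3 by (simp add: eq_neg_iff_add_eq_0 algebra_simps)
  have three: "(3::'a) = 0" using three_zero ch by blast
  have "2*((M$2$2) - (M$1$1))*((N$2$2) - (N$1$1)) + (M$2$3)*(N$3$2) + (N$2$3)*(M$3$2)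
     = trace (M**N) - 3 * ((M$2$2)*(N$1$1) + (M$1$1)*(N$2$2))"
    unfolding trm m3 n3 z by (simp add: algebra_simps)
  then show ?thesis using t(3) three by simp
qed

lemma d33: fixes M :: "'a::field^3^3"
  assumes ch: "CHAR('a) = 3" and t: "trace M = 0"
  shows "(M$3$3) = (M$1$1) - ((M$2$2) - (M$1$1))"
proof -
  have three: "(3::'a) = 0" using three_zero ch by blast
  have "M$3$3 = - (M$1$1) - (M$2$2)" using t unfolding tr3 by (simp add: eq_neg_iff_add_eq_0 algebra_simps)
  also have "\<dots> = (M$1$1) - ((M$2$2) - (M$1$1)) - 3 * (M$1$1)" by (simp add: algebra_simps)
  finally show ?thesis using three by simp
qed

lemma self_iso:
  fixes M :: "'a::field^3^3"
  assumes ch: "CHAR('a) = 3" and z: "M$2$1 = 0" "M$3$1 = 0"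
    and t: "trace M = 0" "trace (M**M) = 0"
  shows "((M$2$2) - (M$1$1))^2 + (M$2$3)*(M$3$2) = 0"
proof -
  have "2*(((M$2$2) - (M$1$1))^2 + (M$2$3)*(M$3$2)) = 0"
    using iso_pair[OF ch z z t(1) t(1) t(2)] by (simp add: algebra_simps power2_eq_square)
  then show ?thesis using two_nz[OF ch] by (metis mult_eq_0_iff)
qed



lemma card3: "card {a,b,c} \<le> 3"
proof -
  have "card (set [a,b,c]) \<le> length [a,b,c]" by (rule card_length)
  then show ?thesis by simp
qed

lemma card2: "card {a,b} \<le> 2"
proof -
  have "card (set [a,b]) \<le> length [a,b]" by (rule card_length)
  then show ?thesis by simp
qed

lemma E_in_F:
  fixes F :: "('a::field^3^3) set"
  assumes ch: "CHAR('a) = 3" and sub: "ms.subspace F" and dim: "ms.dim F = 4"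
    and tr: "\<And>M. M \<in> F \<Longrightarrow> trace M = 0" and trp: "\<And>M N. M \<in> F \<Longrightarrow> N \<in> F \<Longrightarrow> trace (M**N) = 0"
    and y: "\<And>M. M \<in> F \<Longrightarrow> \<exists>t. M *v axis 1 1 = t *s y"
  shows "emat 1 2 \<in> F \<and> emat 1 3 \<in> F"
proof -
  define G where "G = {M\<in>F. M *v axis 1 1 = 0}"
  have GF: "G \<subseteq> F" unfolding G_def by auto
  have Gsub: "ms.subspace G"
    unfolding ms.subspace_def G_def
    using ms.subspace_0[OF sub] ms.subspace_add[OF sub] ms.subspace_scale[OF sub]
    by (auto simp: matrix_vector_mult_add_rdistrib mscale_mv)
  have dG: "3 \<le> ms.dim G" using dim_kernel_step[OF sub y] dim unfolding G_def by simp
  have Gz: "M$i$1 = 0" if "M \<in> G" for M i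
    using that col1[of M i] unfolding G_def by simp
  define E2 :: "'a^3^3" where "E2 = emat 1 2"
  define E3 :: "'a^3^3" where "E3 = emat 1 3"
  have iso: "2*((M$2$2) - (M$1$1))*((N$2$2) - (N$1$1)) + (M$2$3)*(N$3$2) + (N$2$3)*(M$3$2) = 0"
    if "M \<in> G" "N \<in> G" for M N
    using iso_pair[OF ch Gz[OF that(1)] Gz[OF that(1)] Gz[OF that(2)] Gz[OF that(2)]
        tr tr trp] that GF by blast
  have siso: "((M$2$2) - (M$1$1))^2 + (M$2$3)*(M$3$2) = 0" if "M \<in> G" for M
    using self_iso[OF ch Gz[OF that] Gz[OF that]] tr trp that GF by blast
  have m33: "(M$3$3) = (M$1$1) - ((M$2$2) - (M$1$1))" if "M \<in> G" for M
    using d33[OF ch] tr that GF by blast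
  show ?thesis
  proof (cases "\<exists>M0\<in>G. (M0$2$2) - (M0$1$1) \<noteq> 0 \<or> M0$2$3 \<noteq> 0 \<or> M0$3$2 \<noteq> 0")
    case True
    then obtain M0 where M0: "M0 \<in> G" "(M0$2$2) - (M0$1$1) \<noteq> 0 \<or> M0$2$3 \<noteq> 0 \<or> M0$3$2 \<noteq> 0" by blast
    have "G \<subseteq> ms.span {M0, E2, E3}"
    proof
      fix M assume M: "M \<in> G"
      have cr: "((M0$2$2) - (M0$1$1))*(M$2$3) = ((M$2$2) - (M$1$1))*(M0$2$3) \<and>
                ((M0$2$2) - (M0$1$1))*(M$3$2) = ((M$2$2) - (M$1$1))*(M0$3$2) \<and>
                (M0$2$3)*(M$3$2) = (M$2$3)*(M0$3$2)"
        by (rule cross2[OF siso[OF M0(1)] siso[OF M]]) (use iso[OF M0(1) M] in \<open>simp add: algebra_simps\<close>)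
      then obtain l where l: "(M$2$2) - (M$1$1) = l*((M0$2$2) - (M0$1$1))" "M$2$3 = l*(M0$2$3)" "M$3$2 = l*(M0$3$2)"
        using prop3[of "(M0$2$2) - (M0$1$1)" "M$2$3" "(M$2$2) - (M$1$1)" "M0$2$3" "M$3$2" "M0$3$2"] M0(2)
        by blast
      have "M = mscale l M0 + mscale ((M$1$2) - l*(M0$1$2)) E2 + mscale ((M$1$3) - l*(M0$1$3)) E3"
        apply (rule mat3_eqI)
        using l Gz[OF M] Gz[OF M0(1)] m33[OF M] m33[OF M0(1)]
        by (simp_all add: E2_def E3_def algebra_simps)
      also have "\<dots> \<in> ms.span {M0, E2, E3}"
        by (intro ms.span_add ms.span_scale ms.span_base) auto
      finally show "M \<in> ms.span {M0, E2, E3}" .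
    qed
    moreover have "ms.dim (ms.span {M0, E2, E3}) \<le> 3"
      using ms.dim_le_card[of "ms.span {M0, E2, E3}" "{M0, E2, E3}"] card3[of M0 E2 E3] by simp
    ultimately have "G = ms.span {M0, E2, E3}"
      using ms.subspace_dim_equal[OF Gsub ms.subspace_span] dG by simp
    then have "E2 \<in> G" "E3 \<in> G" by (auto intro: ms.span_base)
    then show ?thesis using GF E2_def E3_def by auto
  next
    case False
    have "G \<subseteq> ms.span {E2, E3}"
    proof
      fix M assume M: "M \<in> G"
      have z: "(M$2$2) - (M$1$1) = 0" "M$2$3 = 0" "M$3$2 = 0" using False M by auto
      have "M = mscale (M$1$2) E2 + mscale (M$1$3) E3"
        apply (rule mat3_eqI)
        using z Gz[OF M] m33[OF M]
        by (simp_all add: E2_def E3_def algebra_simps)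
      also have "\<dots> \<in> ms.span {E2, E3}"
        by (intro ms.span_add ms.span_scale ms.span_base) auto
      finally show "M \<in> ms.span {E2, E3}" .
    qed
    then have "ms.dim G \<le> 2"
      using ms.dim_le_card[of G "{E2, E3}"] card2[of E2 E3] by simp
    then show ?thesis using dG by simp
  qed
qed



lemma mm_nth: "((A::'a::field^3^3) ** B)$i$j = (A$i$1)*(B$1$j) + (A$i$2)*(B$2$j) + (A$i$3)*(B$3$j)"
  unfolding matrix_matrix_mult_def sum_3 by simp

lemma mat_nth: "(mat c :: 'a::field^3^3)$i$j = (if i = j then c else 0)"
  by (simp add: mat_def)

lemma mmul_mscale_r: "(A::'a::field^3^3) ** mscale r B = mscale r (A ** B)"
  by (rule mat3_eqI) (simp_all add: mm_nth algebra_simps)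

lemma mmul_mscale_l: "mscale r (A::'a::field^3^3) ** B = mscale r (A ** B)"
  by (rule mat3_eqI) (simp_all add: mm_nth algebra_simps)

lemma conj_hom: "module_hom mscale mscale (\<lambda>N::'a::field^3^3. A ** N ** B)"
proof unfold_locales
  fix b1 b2 :: "'a^3^3"
  show "A ** (b1 + b2) ** B = A ** b1 ** B + A ** b2 ** B"
    by (rule mat3_eqI) (simp_all add: mm_nth algebra_simps)
next
  fix r and b :: "'a^3^3"
  show "A ** mscale r b ** B = mscale r (A ** b ** B)"
    by (simp add: mmul_mscale_r mmul_mscale_l)
qed

lemma NT3_iff: "N \<in> NT3 \<longleftrightarrow> N$1$1 = 0 \<and> N$2$2 = 0 \<and> N$3$3 = 0 \<and> N$1$3 = 0 \<and> N$2$1 = 0 \<and> N$2$3 = 0"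
proof
  assume "N \<in> NT3" then show "N$1$1 = 0 \<and> N$2$2 = 0 \<and> N$3$3 = 0 \<and> N$1$3 = 0 \<and> N$2$1 = 0 \<and> N$2$3 = 0"
    unfolding NT3_def le3 by auto
next
  assume h: "N$1$1 = 0 \<and> N$2$2 = 0 \<and> N$3$3 = 0 \<and> N$1$3 = 0 \<and> N$2$1 = 0 \<and> N$2$3 = 0"
  show "N \<in> NT3" unfolding NT3_def le3
  proof (intro CollectI allI impI)
    fix i j :: 3 assume "(i = 1 \<and> (j = 1 \<or> j = 3)) \<or> i = 2 \<or> (i = 3 \<and> j = 3)"
    then show "N$i$j = 0" using h exhaust_3[of j] by auto
  qed
qed

lemma KI_sub: "ms.subspace (KI_NT3 :: ('a::field^3^3) set)"
  unfolding ms.subspace_def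
proof (intro conjI ballI allI)
  show "(0::'a^3^3) \<in> KI_NT3" unfolding KI_NT3_def
    by (rule CollectI, rule exI[of _ 0], rule exI[of _ 0]) (simp add: NT3_iff)
next
  fix U V :: "'a^3^3" assume "U \<in> KI_NT3" "V \<in> KI_NT3"
  then obtain c N d N' where U: "U = mat c + N" "N \<in> NT3" and V: "V = mat d + N'" "N' \<in> NT3"
    unfolding KI_NT3_def by blast
  have "U + V = mat (c+d) + (N + N')" unfolding U V by (rule mat3_eqI) (simp_all add: mat_nth)
  moreover have "N + N' \<in> NT3" using U(2) V(2) by (simp add: NT3_iff)
  ultimately show "U + V \<in> KI_NT3" unfolding KI_NT3_def by blast
next
  fix k and U :: "'a^3^3" assume "U \<in> KI_NT3"
  then obtain c N where U: "U = mat c + N" "N \<in> NT3" unfolding KI_NT3_def by blast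
  have "mscale k U = mat (k*c) + mscale k N" unfolding U by (rule mat3_eqI) (simp_all add: mat_nth algebra_simps)
  moreover have "mscale k N \<in> NT3" using U(2) by (simp add: NT3_iff)
  ultimately show "mscale k U \<in> KI_NT3" unfolding KI_NT3_def by blast
qed

lemma KI_span: "(KI_NT3 :: ('a::field^3^3) set) = ms.span {mat 1, emat 1 2, emat 3 1, emat 3 2}"
proof
  show "(KI_NT3 :: ('a^3^3) set) \<subseteq> ms.span {mat 1, emat 1 2, emat 3 1, emat 3 2}"
  proof
    fix U :: "'a^3^3" assume "U \<in> KI_NT3"
    then obtain c N where U: "U = mat c + N" "N \<in> NT3" unfolding KI_NT3_def by blast
    have "U = mscale c (mat 1) + mscale (N$1$2) (emat 1 2) + mscale (N$3$1) (emat 3 1) + mscale (N$3$2) (emat 3 2)"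
      unfolding U(1) using U(2) by (intro mat3_eqI) (simp_all add: mat_nth NT3_iff)
    also have "\<dots> \<in> ms.span {mat 1, emat 1 2, emat 3 1, emat 3 2}"
      by (intro ms.span_add ms.span_scale ms.span_base) auto
    finally show "U \<in> ms.span {mat 1, emat 1 2, emat 3 1, emat 3 2}" .
  qed
next
  have "mat 1 \<in> (KI_NT3 :: ('a::field^3^3) set)" unfolding KI_NT3_def
    by (rule CollectI, rule exI[of _ 1], rule exI[of _ 0]) (simp add: NT3_iff)
  moreover have "emat i j \<in> (KI_NT3 :: ('a::field^3^3) set)" if "emat i j \<in> (NT3 :: ('a::field^3^3) set)" for i j
  proof -
    have "emat i j = mat 0 + (emat i j :: 'a^3^3)" by simp
    then show ?thesis unfolding KI_NT3_def using that by blast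
  qed
  moreover have "emat 1 2 \<in> (NT3 :: ('a::field^3^3) set)" "emat 3 1 \<in> (NT3 :: ('a::field^3^3) set)"
      "emat 3 2 \<in> (NT3 :: ('a::field^3^3) set)"
    by (simp_all add: NT3_iff)
  ultimately have "{mat 1, emat 1 2, emat 3 1, emat 3 2} \<subseteq> (KI_NT3 :: ('a::field^3^3) set)"
    by simp
  then show "ms.span {mat 1, emat 1 2, emat 3 1, emat 3 2} \<subseteq> (KI_NT3 :: ('a::field^3^3) set)"
    by (rule ms.span_minimal[OF _ KI_sub])
qed

lemma inv_from_det: "det (P::'a::field^3^3) \<noteq> 0 \<Longrightarrow> \<exists>Q. P ** Q = mat 1 \<and> Q ** P = mat 1"
  using invertible_det_nz[of P] unfolding invertible_def by blast



lemma card4: "card {a,b,c,d} \<le> 4"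
proof -
  have "card (set [a,b,c,d]) \<le> length [a,b,c,d]" by (rule card_length)
  then show ?thesis by simp
qed

lemma F_structure:
  fixes F :: "('a::field^3^3) set"
  assumes ch: "CHAR('a) = 3" and sub: "ms.subspace F" and dim: "ms.dim F = 4"
    and tr: "\<And>M. M \<in> F \<Longrightarrow> trace M = 0" and trp: "\<And>M N. M \<in> F \<Longrightarrow> N \<in> F \<Longrightarrow> trace (M**N) = 0"
    and y: "\<And>M. M \<in> F \<Longrightarrow> \<exists>t. M *v axis 1 1 = t *s y"
  shows "\<exists>a1 b1 c1. (a1 \<noteq> 0 \<or> b1 \<noteq> 0 \<or> c1 \<noteq> 0) \<and> a1^2 + b1*c1 = 0 \<and>
     (\<forall>M\<in>F. M$2$1 = 0 \<and> M$3$1 = 0 \<and> (\<exists>l. M$2$2 = (M$1$1) + l*a1 \<and> M$2$3 = l*b1 \<and> M$3$2 = l*c1 \<and> M$3$3 = (M$1$1) - l*a1))"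
proof -
  have E: "emat 1 2 \<in> F" "emat 1 3 \<in> F" using E_in_F[OF assms] by auto
  have lz: "M$2$1 = 0 \<and> M$3$1 = 0" if "M \<in> F" for M
  proof -
    have "trace (M ** emat 1 2) = M$2$1" by (simp add: trm)
    moreover have "trace (M ** emat 1 3) = M$3$1" by (simp add: trm)
    ultimately show ?thesis using trp[OF that E(1)] trp[OF that E(2)] by simp
  qed
  have iso: "2*((M$2$2) - (M$1$1))*((N$2$2) - (N$1$1)) + (M$2$3)*(N$3$2) + (N$2$3)*(M$3$2) = 0"
    if "M \<in> F" "N \<in> F" for M N
    using iso_pair[OF ch _ _ _ _ tr[OF that(1)] tr[OF that(2)] trp[OF that]] lz that by blast
  have siso: "((M$2$2) - (M$1$1))^2 + (M$2$3)*(M$3$2) = 0" if "M \<in> F" for M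
    using self_iso[OF ch _ _ tr[OF that] trp[OF that that]] lz that by blast
  have m33: "(M$3$3) = (M$1$1) - ((M$2$2) - (M$1$1))" if "M \<in> F" for M
    using d33[OF ch tr[OF that]] .
  show ?thesis
  proof (cases "\<exists>M1\<in>F. (M1$2$2) - (M1$1$1) \<noteq> 0 \<or> M1$2$3 \<noteq> 0 \<or> M1$3$2 \<noteq> 0")
    case True
    then obtain M1 where M1: "M1 \<in> F" "(M1$2$2) - (M1$1$1) \<noteq> 0 \<or> M1$2$3 \<noteq> 0 \<or> M1$3$2 \<noteq> 0" by blast
    have "\<exists>l. M$2$2 = (M$1$1) + l*((M1$2$2) - (M1$1$1)) \<and> M$2$3 = l*(M1$2$3) \<and> M$3$2 = l*(M1$3$2) \<and> M$3$3 = (M$1$1) - l*((M1$2$2) - (M1$1$1))"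
      if M: "M \<in> F" for M
    proof -
      have cr: "((M1$2$2) - (M1$1$1))*(M$2$3) = ((M$2$2) - (M$1$1))*(M1$2$3) \<and>
                ((M1$2$2) - (M1$1$1))*(M$3$2) = ((M$2$2) - (M$1$1))*(M1$3$2) \<and>
                (M1$2$3)*(M$3$2) = (M$2$3)*(M1$3$2)"
        by (rule cross2[OF siso[OF M1(1)] siso[OF M]]) (use iso[OF M1(1) M] in \<open>simp add: algebra_simps\<close>)
      then obtain l where l: "(M$2$2) - (M$1$1) = l*((M1$2$2) - (M1$1$1))" "M$2$3 = l*(M1$2$3)" "M$3$2 = l*(M1$3$2)"
        using prop3[of "(M1$2$2) - (M1$1$1)" "M$2$3" "(M$2$2) - (M$1$1)" "M1$2$3" "M$3$2" "M1$3$2"] M1(2)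
        by blast
      have e2: "M$2$2 = (M$1$1) + l*((M1$2$2) - (M1$1$1))" using l(1) by (metis diff_eq_eq add.commute)
      have e3: "M$3$3 = (M$1$1) - l*((M1$2$2) - (M1$1$1))" using m33[OF M] l(1) by metis
      show ?thesis using l e2 e3 by blast
    qed
    then show ?thesis using M1(2) siso[OF M1(1)] lz by blast
  next
    case False
    have "F \<subseteq> ms.span {mat 1, emat 1 2, emat 1 3}"
    proof
      fix M assume M: "M \<in> F"
      have z: "(M$2$2) - (M$1$1) = 0" "M$2$3 = 0" "M$3$2 = 0" using False M by auto
      have "M = mscale (M$1$1) (mat 1) + mscale (M$1$2) (emat 1 2) + mscale (M$1$3) (emat 1 3)"
        apply (rule mat3_eqI)
        using z lz[OF M] m33[OF M]
        by (simp_all add: mat_nth algebra_simps)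
      also have "\<dots> \<in> ms.span {mat 1, emat 1 2, emat 1 3}"
        by (intro ms.span_add ms.span_scale ms.span_base) auto
      finally show "M \<in> ms.span {mat 1, emat 1 2, emat 1 3}" .
    qed
    then have "ms.dim F \<le> card ({mat 1, emat 1 2, emat 1 3} :: ('a^3^3) set)" by (intro ms.dim_le_card) auto
    then have "ms.dim F \<le> 3" using card3[of "mat 1 :: 'a^3^3" "emat 1 2" "emat 1 3"] by linarith
    then show ?thesis using dim by simp
  qed
qed




lemma KI_elem: "N \<in> NT3 \<Longrightarrow> mat c + N \<in> KI_NT3"
  unfolding KI_NT3_def by blast

lemma sim_struct:
  fixes F :: "('a::field^3^3) set"
  assumes sub: "ms.subspace F" and dim: "ms.dim F = 4"
    and nz: "aa \<noteq> 0 \<or> bb \<noteq> 0 \<or> cc \<noteq> 0" and q: "aa^2 + bb*cc = 0"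
    and st: "\<And>M. M \<in> F \<Longrightarrow> M$2$1 = 0 \<and> M$3$1 = 0 \<and> (\<exists>l. M$2$2 = (M$1$1) + l*aa \<and> M$2$3 = l*bb \<and> M$3$2 = l*cc \<and> M$3$3 = (M$1$1) - l*aa)"
  shows "similar_space F KI_NT3"
proof -
  obtain P1 :: "'a^3^3" where P1: "det P1 \<noteq> 0" and K: "\<And>M. M \<in> F \<Longrightarrow> \<exists>K\<in>KI_NT3. M ** P1 = P1 ** K"
  proof (cases "bb = 0")
    case False
    define P1 :: "'a^3^3" where "P1 = vector [vector [0,0,1], vector [bb,0,0], vector [-aa,1,0]]"
    show thesis
    proof (rule that[of P1])
      show "det P1 \<noteq> 0" using False by (simp add: P1_def det_3)
    next
      fix M assume M: "M \<in> F"
      obtain l where l: "M$2$2 = (M$1$1) + l*aa" "M$2$3 = l*bb" "M$3$2 = l*cc" "M$3$3 = (M$1$1) - l*aa"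
        using st[OF M] by blast
      have z: "M$2$1 = 0" "M$3$1 = 0" using st[OF M] by auto
      define N :: "'a^3^3" where "N = vector [vector [0, l, 0], vector [0,0,0], vector [(M$1$2)*bb - (M$1$3)*aa, M$1$3, 0]]"
      have N: "N \<in> NT3" by (simp add: N_def NT3_iff)
      have "l*cc*bb + l*aa*aa = l*(aa^2 + bb*cc)" by (simp add: algebra_simps power2_eq_square)
      then have "l*cc*bb + l*aa*aa = 0" using q by simp
      then have qq: "aa * (aa * l) + bb * (cc * l) = 0" by (simp add: algebra_simps)
      have "M ** P1 = P1 ** (mat (M$1$1) + N)"
        by (rule mat3_eqI) (simp_all add: mm_nth P1_def N_def mat_nth l z qq algebra_simps)
      then show "\<exists>K\<in>KI_NT3. M ** P1 = P1 ** K" using KI_elem[OF N] by blast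
    qed
  next
    case True
    then have a0: "aa = 0" using q by simp
    define P1 :: "'a^3^3" where "P1 = vector [vector [0,0,1], vector [0,1,0], vector [1,0,0]]"
    show thesis
    proof (rule that[of P1])
      show "det P1 \<noteq> 0" by (simp add: P1_def det_3)
    next
      fix M assume M: "M \<in> F"
      obtain l where l: "M$2$2 = (M$1$1) + l*aa" "M$2$3 = l*bb" "M$3$2 = l*cc" "M$3$3 = (M$1$1) - l*aa"
        using st[OF M] by blast
      have z: "M$2$1 = 0" "M$3$1 = 0" using st[OF M] by auto
      define N :: "'a^3^3" where "N = vector [vector [0, l*cc, 0], vector [0,0,0], vector [M$1$3, M$1$2, 0]]"
      have N: "N \<in> NT3" by (simp add: N_def NT3_iff)
      have "M ** P1 = P1 ** (mat (M$1$1) + N)"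
        by (rule mat3_eqI) (simp_all add: mm_nth P1_def N_def mat_nth l z a0 True algebra_simps)
      then show "\<exists>K\<in>KI_NT3. M ** P1 = P1 ** K" using KI_elem[OF N] by blast
    qed
  qed
  obtain Q1 where Q1: "P1 ** Q1 = mat 1" "Q1 ** P1 = mat 1" using inv_from_det[OF P1] by blast
  define cj where "cj = (\<lambda>N::'a^3^3. P1 ** N ** Q1)"
  define K4 :: "('a^3^3) set" where "K4 = {mat 1, emat 1 2, emat 3 1, emat 3 2}"
  have FK: "F \<subseteq> cj ` KI_NT3"
  proof
    fix M assume M: "M \<in> F"
    obtain K where K: "K \<in> KI_NT3" "M ** P1 = P1 ** K" using K[OF M] by blast
    have "M = M ** (P1 ** Q1)" using Q1 by simp
    also have "\<dots> = P1 ** K ** Q1" by (simp add: matrix_mul_assoc K(2))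
    finally show "M \<in> cj ` KI_NT3" using K(1) unfolding cj_def by blast
  qed
  have "cj ` KI_NT3 = cj ` ms.span K4" unfolding K4_def by (simp only: KI_span)
  also have "\<dots> = ms.span (cj ` K4)" unfolding cj_def by (rule module_hom.span_image[OF conj_hom, symmetric])
  finally have img: "cj ` KI_NT3 = ms.span (cj ` K4)" .
  have "ms.dim (ms.span (cj ` K4)) \<le> card (cj ` K4)" by (intro ms.dim_le_card) (auto simp: K4_def)
  also have "\<dots> \<le> card K4" by (rule card_image_le) (simp add: K4_def)
  also have "\<dots> \<le> 4" unfolding K4_def by (rule card4)
  finally have "ms.dim (ms.span (cj ` K4)) \<le> ms.dim F" using dim by simp
  then have "F = ms.span (cj ` K4)"
    using ms.subspace_dim_equal[OF sub ms.subspace_span] FK img by simp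
  then have "F = (\<lambda>M. P1 ** M ** Q1) ` KI_NT3" using img unfolding cj_def by simp
  then show ?thesis unfolding similar_space_def using Q1 by blast
qed



interpretation msp: finite_dimensional_vector_space_pair_1
  "mscale :: 'a::field \<Rightarrow> 'a^3^3 \<Rightarrow> 'a^3^3" "(\<lambda>p. emat (fst p) (snd p)) ` UNIV"
  "mscale :: 'a::field \<Rightarrow> 'a^3^3 \<Rightarrow> 'a^3^3" ..

lemma core:
  fixes F :: "('a::field^3^3) set"
  assumes ch: "CHAR('a) = 3" and sub: "ms.subspace F" and dim: "ms.dim F = 4"
    and tr: "\<And>M. M \<in> F \<Longrightarrow> trace M = 0" and trp: "\<And>M N. M \<in> F \<Longrightarrow> N \<in> F \<Longrightarrow> trace (M**N) = 0"
    and y: "\<And>M. M \<in> F \<Longrightarrow> \<exists>t. M *v axis 1 1 = t *s y"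
  shows "similar_space F KI_NT3"
proof -
  obtain aa bb cc where "(aa \<noteq> 0 \<or> bb \<noteq> 0 \<or> cc \<noteq> 0)" "aa^2 + bb*cc = 0"
     "\<forall>M\<in>F. M$2$1 = 0 \<and> M$3$1 = 0 \<and> (\<exists>l. M$2$2 = (M$1$1) + l*aa \<and> M$2$3 = l*bb \<and> M$3$2 = l*cc \<and> M$3$3 = (M$1$1) - l*aa)"
    using F_structure[OF assms] by blast
  then show ?thesis using sim_struct[OF sub dim] by blast
qed

lemma basis_mat:
  fixes x :: "'a::field^3"
  assumes "x \<noteq> 0"
  shows "\<exists>P. det P \<noteq> 0 \<and> P *v axis 1 1 = x"
proof -
  have col: "P *v axis 1 1 = x" if "P$1$1 = x$1" "P$2$1 = x$2" "P$3$1 = x$3" for P :: "'a^3^3"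
    using that by (simp add: vec_eq_iff forall_3 matrix_vector_mult_def sum_3 axis_def)
  have "x$1 \<noteq> 0 \<or> x$2 \<noteq> 0 \<or> x$3 \<noteq> 0" using assms by (simp add: vec_eq_iff forall_3)
  moreover
  { assume h: "x$1 \<noteq> 0"
    define P :: "'a^3^3" where "P = vector [vector [x$1,0,0], vector [x$2,1,0], vector [x$3,0,1]]"
    have ?thesis using h by (intro exI[of _ P] conjI col) (simp_all add: P_def det_3) }
  moreover
  { assume h: "x$2 \<noteq> 0"
    define P :: "'a^3^3" where "P = vector [vector [x$1,1,0], vector [x$2,0,0], vector [x$3,0,1]]"
    have ?thesis using h by (intro exI[of _ P] conjI col) (simp_all add: P_def det_3) }
  moreover
  { assume h: "x$3 \<noteq> 0"
    define P :: "'a^3^3" where "P = vector [vector [x$1,1,0], vector [x$2,0,1], vector [x$3,0,0]]"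
    have ?thesis using h by (intro exI[of _ P] conjI col) (simp_all add: P_def det_3) }
  ultimately show ?thesis by blast
qed

lemma mv_scale: "(A::'a::field^3^3) *v (c *s v) = c *s (A *v v)"
  by (simp add: vec_eq_iff matrix_vector_mult_def sum_distrib_left algebra_simps)

lemma conj_cancel: assumes "P ** Q = mat (1::'a::field)" shows "P ** (Q ** M ** P) ** Q = (M::'a^3^3)"
proof -
  have "P ** (Q ** M ** P) ** Q = (P ** Q) ** M ** (P ** Q)" by (simp add: matrix_mul_assoc)
  also have "\<dots> = M" unfolding assms by simp
  finally show ?thesis .
qed

lemma trace_conj: assumes "P ** Q = mat (1::'a::field)" shows "trace (Q ** M ** P) = trace (M::'a^3^3)"
proof -
  have "trace (Q ** M ** P) = trace (P ** (Q ** M))" by (rule trace_mul_sym)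
  also have "\<dots> = trace ((P ** Q) ** M)" by (simp add: matrix_mul_assoc)
  finally show ?thesis using assms by simp
qed

lemma prod_conj: assumes "P ** Q = mat (1::'a::field)"
  shows "(Q ** M ** P) ** (Q ** N ** P) = Q ** (M ** N) ** (P::'a^3^3)"
proof -
  have "(Q ** M ** P) ** (Q ** N ** P) = Q ** M ** (P ** Q) ** N ** P" by (simp add: matrix_mul_assoc)
  also have "\<dots> = Q ** (M ** N) ** P" unfolding assms by (simp add: matrix_mul_assoc)
  finally show ?thesis .
qed

theorem mainTheorem18:
  fixes F :: "('a::field ^3^3) set"
  assumes "CHAR('a) = 3"
    and "exceptional_one_spec F"
  shows "\<forall>x::'a^3. x \<noteq> 0 \<longrightarrow> vec.dim {M *v x | M. M \<in> F} \<ge> 2"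
proof (intro allI impI)
  fix x :: "'a^3" assume x: "x \<noteq> 0"
  note ch = assms(1)
  have one: "one_spec_subspace F" and dimF: "ms.dim F = 4" and nsim: "\<not> similar_space F KI_NT3"
    using assms(2) unfolding exceptional_one_spec_def by auto
  have sub: "ms.subspace F" using one unfolding one_spec_subspace_def by simp
  show "vec.dim {M *v x | M. M \<in> F} \<ge> 2"
  proof (rule ccontr)
    assume lt: "\<not> 2 \<le> vec.dim {M *v x | M. M \<in> F}"
    define S where "S = {M *v x | M. M \<in> F}"
    obtain B where B: "B \<subseteq> S" "vec.independent B" "S \<subseteq> vec.span B" "card B = vec.dim S"
      using vec.basis_exists by blast
    have finB: "finite B" using B(2) vec.finiteI_independent by blast
    have cB: "card B \<le> Suc 0" using lt B(4) unfolding S_def by simp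
    obtain y where By: "B \<subseteq> {y}"
    proof (cases "B = {}")
      case True then show thesis using that by blast
    next
      case False then obtain y where "y \<in> B" by blast
      then have "B \<subseteq> {y}" using card_le_Suc0_iff_eq[OF finB] cB by blast
      then show thesis by (rule that)
    qed
    have yy: "\<exists>t. M *v x = t *s y" if "M \<in> F" for M
    proof -
      have "M *v x \<in> vec.span B" using that B(3) unfolding S_def by blast
      also have "\<dots> \<subseteq> vec.span {y}" using By by (rule vec.span_mono)
      finally show ?thesis unfolding vec.span_singleton by blast
    qed
    obtain P :: "'a^3^3" where P: "det P \<noteq> 0" "P *v axis 1 1 = x" using basis_mat[OF x] by blast
    obtain Q where PQ: "P ** Q = mat 1" "Q ** P = mat 1" using inv_from_det[OF P(1)] by blast
    define F' where "F' = (\<lambda>M. Q ** M ** P) ` F"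
    have FF': "F = (\<lambda>M. P ** M ** Q) ` F'"
      unfolding F'_def image_image conj_cancel[OF PQ(1)] by simp
    have hom1: "Vector_Spaces.linear mscale mscale (\<lambda>M::'a^3^3. Q ** M ** P)"
      using conj_hom module_hom_iff_linear by blast
    have hom2: "Vector_Spaces.linear mscale mscale (\<lambda>M::'a^3^3. P ** M ** Q)"
      using conj_hom module_hom_iff_linear by blast
    have sub': "ms.subspace F'" unfolding F'_def by (rule module_hom.subspace_image[OF conj_hom sub])
    have "ms.dim F' \<le> ms.dim F" unfolding F'_def by (rule msp.dim_image_le[OF hom1])
    moreover have "ms.dim F \<le> ms.dim F'" by (subst FF') (rule msp.dim_image_le[OF hom2])
    ultimately have dim': "ms.dim F' = 4" using dimF by simp
    have tr': "trace M' = 0" if "M' \<in> F'" for M'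
      using that F_trace[OF ch one] trace_conj[OF PQ(1)] unfolding F'_def by auto
    have trp': "trace (M' ** N') = 0" if "M' \<in> F'" "N' \<in> F'" for M' N'
      using that F_trace[OF ch one] trace_conj[OF PQ(1)] prod_conj[OF PQ(1)] unfolding F'_def by auto
    have y': "\<exists>t. M' *v axis 1 1 = t *s (Q *v y)" if mF: "M' \<in> F'" for M'
    proof -
      obtain M where M: "M \<in> F" "M' = Q ** M ** P" using mF unfolding F'_def by blast
      obtain t where t: "M *v x = t *s y" using yy[OF M(1)] by blast
      have "M' *v axis 1 1 = Q *v (M *v (P *v axis 1 1))" unfolding M(2) by (simp add: matrix_vector_mul_assoc matrix_mul_assoc)
      also have "\<dots> = t *s (Q *v y)" unfolding P(2) t by (rule mv_scale)
      finally show ?thesis by blast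
    qed
    obtain P1 Q1 where P1: "P1 ** Q1 = mat 1" "Q1 ** P1 = mat 1" "F' = (\<lambda>M. P1 ** M ** Q1) ` KI_NT3"
      using core[OF ch sub' dim' tr' trp' y'] unfolding similar_space_def by blast
    have "F = (\<lambda>M. (P ** P1) ** M ** (Q1 ** Q)) ` KI_NT3"
      unfolding FF' P1(3) image_image by (simp add: matrix_mul_assoc)
    moreover have "(P ** P1) ** (Q1 ** Q) = mat 1"
    proof -
      have "(P ** P1) ** (Q1 ** Q) = P ** (P1 ** Q1) ** Q" by (simp add: matrix_mul_assoc)
      then show ?thesis using P1(1) PQ(1) by simp
    qed
    moreover have "(Q1 ** Q) ** (P ** P1) = mat 1"
    proof -
      have "(Q1 ** Q) ** (P ** P1) = Q1 ** (Q ** P) ** P1" by (simp add: matrix_mul_assoc)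
      then show ?thesis using P1(2) PQ(2) by simp
    qed
    ultimately have "similar_space F KI_NT3" unfolding similar_space_def by blast
    then show False using nsim by simp
  qed
qed


end
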